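(* Let $b$ be a locally finite graph over a countable set $X$. The following statements are equivalent: (i) $R=\delta_w$ for some weight $w$ compatible to $b$; (ii) $b$ is a block graph.
   Context: A graph over a countable set $X$ is a symmetric map $b:X\times X\to[0,\infty)$ with $b(x,x)=0$ and $\sum_{y}b(x,y)<\infty$ for all $x$; $x\sim y$ means $b(x,y)>0$. It is locally finite if every vertex has finitely many neighbours. A block graph is a graph in which any two vertices are connected by a unique induced path. For $f:X\to\mathbb R$ let $Q(f):=\frac12\sum_{x,y}b(x,y)(f(x)-f(y))^2$; the resistance metric is $R(x,y):=\sup\{(f(y)-f(x))^2\mid Q(f)=1\}$. A weight on $X$ is a symmetric $w:X\times X\to[0,\infty]$ with $w(x,y)=0$ iff $x=y$; it is compatible to $b$ if $w(x,y)=\infty$ whenever $b(x,y)=0$ and $x\ne y$. $\delta_w(x,y):=\inf\{\sum_{i=1}^n w(x_{i-1},x_i)\mid (x_0,\dots,x_n)\text{ distinct elements of }X,\ x_0=x,\ x_n=y\}$. *)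

theory Defs
  imports "HOL-Analysis.Analysis" "HOL-Library.Extended_Nonnegative_Real"
begin

text \<open>The vertex set X is the (countable) type 'a; a graph is b :: 'a => 'a => real.\<close>

definition is_graph :: "('a \<Rightarrow> 'a \<Rightarrow> real) \<Rightarrow> bool" where
  "is_graph b \<longleftrightarrow> (\<forall>x y. b x y = b y x) \<and> (\<forall>x y. 0 \<le> b x y) \<and> (\<forall>x. b x x = 0)
     \<and> (\<forall>x. (\<lambda>y. b x y) summable_on UNIV)"

definition locally_finite :: "('a \<Rightarrow> 'a \<Rightarrow> real) \<Rightarrow> bool" where
  "locally_finite b \<longleftrightarrow> (\<forall>x. finite {y. b x y > 0})"

definition graph_connected :: "('a \<Rightarrow> 'a \<Rightarrow> real) \<Rightarrow> bool" where
  "graph_connected b \<longleftrightarrow> (\<forall>x y. (\<lambda>u v. b u v > 0)\<^sup>*\<^sup>* x y)"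

definition energy :: "('a \<Rightarrow> 'a \<Rightarrow> real) \<Rightarrow> ('a \<Rightarrow> real) \<Rightarrow> ennreal" where
  "energy b f = (1/2) * (\<Sum>\<^sub>\<infinity>p\<in>UNIV. ennreal (b (fst p) (snd p) * (f (fst p) - f (snd p))\<^sup>2))"

definition resistance :: "('a \<Rightarrow> 'a \<Rightarrow> real) \<Rightarrow> 'a \<Rightarrow> 'a \<Rightarrow> ennreal" where
  "resistance b x y = Sup {ennreal ((f y - f x)\<^sup>2) | f. energy b f = 1}"

definition is_weight :: "('a \<Rightarrow> 'a \<Rightarrow> ennreal) \<Rightarrow> bool" where
  "is_weight w \<longleftrightarrow> (\<forall>x y. w x y = w y x) \<and> (\<forall>x y. w x y = 0 \<longleftrightarrow> x = y)"

definition compatible :: "('a \<Rightarrow> 'a \<Rightarrow> ennreal) \<Rightarrow> ('a \<Rightarrow> 'a \<Rightarrow> real) \<Rightarrow> bool" where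
  "compatible w b \<longleftrightarrow> (\<forall>x y. b x y = 0 \<and> x \<noteq> y \<longrightarrow> w x y = \<infinity>)"

definition path_length :: "('a \<Rightarrow> 'a \<Rightarrow> ennreal) \<Rightarrow> 'a list \<Rightarrow> ennreal" where
  "path_length w xs = sum_list (map (\<lambda>(u, v). w u v) (zip xs (tl xs)))"

definition path_metric :: "('a \<Rightarrow> 'a \<Rightarrow> ennreal) \<Rightarrow> 'a \<Rightarrow> 'a \<Rightarrow> ennreal" where
  "path_metric w x y = Inf {path_length w xs | xs. xs \<noteq> [] \<and> distinct xs \<and> hd xs = x \<and> last xs = y}"

definition induced_path :: "('a \<Rightarrow> 'a \<Rightarrow> real) \<Rightarrow> 'a list \<Rightarrow> 'a \<Rightarrow> 'a \<Rightarrow> bool" where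
  "induced_path b xs x y \<longleftrightarrow> xs \<noteq> [] \<and> distinct xs \<and> hd xs = x \<and> last xs = y \<and>
     (\<forall>i j. i < length xs \<and> j < length xs \<longrightarrow>
        (b (xs ! i) (xs ! j) > 0 \<longleftrightarrow> (i = Suc j \<or> j = Suc i)))"

definition block_graph :: "('a \<Rightarrow> 'a \<Rightarrow> real) \<Rightarrow> bool" where
  "block_graph b \<longleftrightarrow> (\<forall>x y. \<exists>!xs. induced_path b xs x y)"

end

theory Submission
  imports Defs
begin

lemma infsum_ennreal_cmult:
  "infsum (\<lambda>x. (c::ennreal) * f x) A = c * infsum f A"
proof -
  have "infsum (\<lambda>x. c * f x) A = (SUP F\<in>{F. finite F \<and> F\<subseteq>A}. sum (\<lambda>x. c * f x) F)"
    by (rule nonneg_infsum_complete) simp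
  also have "\<dots> = (SUP F\<in>{F. finite F \<and> F\<subseteq>A}. c * sum f F)"
    by (simp add: sum_distrib_left)
  also have "\<dots> = c * (SUP F\<in>{F. finite F \<and> F\<subseteq>A}. sum f F)"
    by (simp add: SUP_mult_left_ennreal)
  also have "(SUP F\<in>{F. finite F \<and> F\<subseteq>A}. sum f F) = infsum f A"
    by (rule nonneg_infsum_complete[symmetric]) simp
  finally show ?thesis .
qed

lemma infsum_ennreal_mono:
  "(\<And>x. (f::_\<Rightarrow>ennreal) x \<le> g x) \<Longrightarrow> infsum f A \<le> infsum g A"
  by (rule infsum_mono) (auto intro: nonneg_summable_on_complete)

lemma infsum_ennreal_add:
  "infsum (\<lambda>x. (f::_\<Rightarrow>ennreal) x + g x) A = infsum f A + infsum g A"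
  by (rule infsum_add) (auto intro: nonneg_summable_on_complete)

lemma infsum_ennreal_split:
  assumes "finite F"
  shows "infsum (f::_\<Rightarrow>ennreal) UNIV = sum f F + infsum f (-F)"
proof -
  have "infsum f (F \<union> -F) = infsum f F + infsum f (-F)"
    by (rule infsum_Un_disjoint) (auto intro: nonneg_summable_on_complete)
  then show ?thesis using assms by simp
qed

lemma sum_le_infsum_ennreal:
  assumes "finite F"
  shows "sum (f::_\<Rightarrow>ennreal) F \<le> infsum f UNIV"
  using infsum_ennreal_split[OF assms, of f] by simp

lemma path_cross:
  assumes "R\<^sup>*\<^sup>* a c" "P a" "\<not> P c"
  shows "\<exists>u v. R u v \<and> P u \<and> \<not> P v"
  using assms by (induction rule: rtranclp_induct) auto

lemma sq_split_ineq:
  fixes a c t :: real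
  shows "(max a t - max c t)^2 + (min a t - min c t)^2 \<le> (a - c)^2"
proof -
  have e: "(a-c)^2 = (a-t)^2 + (t-c)^2 + 2*((a-t)*(t-c))"
    by (simp add: power2_eq_square algebra_simps)
  consider "a \<le> t" "c \<le> t" | "a \<ge> t" "c \<ge> t" | "a \<le> t" "c \<ge> t" | "a \<ge> t" "c \<le> t" by linarith
  then show ?thesis
  proof cases
    case 3
    then have "(max a t - max c t)^2 + (min a t - min c t)^2 = (t - c)^2 + (a - t)^2" by (simp add: max_def min_def)
    moreover have "(a-t)*(t-c) \<ge> 0" using 3 by (intro mult_nonpos_nonpos) auto
    ultimately show ?thesis using e by linarith
  next
    case 4
    then have "(max a t - max c t)^2 + (min a t - min c t)^2 = (a - t)^2 + (t - c)^2" by (simp add: max_def min_def)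
    moreover have "(a-t)*(t-c) \<ge> 0" using 4 by (intro mult_nonneg_nonneg) auto
    ultimately show ?thesis using e by linarith
  qed (simp_all add: max_def min_def)
qed

lemma sq_split_strict:
  fixes a c t :: real
  assumes "a > t" "c < t"
  shows "(max a t - max c t)^2 + (min a t - min c t)^2 + 2*(a-t)*(t-c) = (a - c)^2"
  using assms by (simp add: max_def min_def power2_eq_square algebra_simps)

lemma cs_ineq:
  fixes a c A B :: real
  assumes "A > 0" "B > 0"
  shows "(a+c)^2/(A+B) \<le> a^2/A + c^2/B"
proof -
  have "(a+c)^2 * (A*B) \<le> (a^2*B + c^2*A) * (A+B)"
  proof -
    have "0 \<le> (a*B - c*A)^2" by simp
    then show ?thesis by (simp add: power2_eq_square algebra_simps)
  qed
  moreover have "a^2/A + c^2/B = (a^2*B + c^2*A)/(A*B)" using assms by (simp add: field_simps)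
  ultimately show ?thesis using assms
    by (simp add: frac_le_eq) (rule divide_nonpos_pos, simp_all)
qed

locale gr =
  fixes b :: "'a::countable \<Rightarrow> 'a \<Rightarrow> real"
  assumes G: "is_graph b" and LF: "locally_finite b" and CN: "graph_connected b"
begin

lemma b_sym: "b x y = b y x" using G by (simp add: is_graph_def)
lemma b_nonneg: "0 \<le> b x y" using G by (simp add: is_graph_def)
lemma b_refl[simp]: "b x x = 0" using G by (simp add: is_graph_def)
lemma finN: "finite {y. b x y > 0}" using LF by (simp add: locally_finite_def)
lemma conn: "(\<lambda>u v. b u v > 0)\<^sup>*\<^sup>* x y" using CN by (simp add: graph_connected_def)
lemma b_not_pos: "\<not> b x y > 0 \<Longrightarrow> b x y = 0" using b_nonneg[of x y] by linarith

definition eterm :: "('a \<Rightarrow> real) \<Rightarrow> 'a \<times> 'a \<Rightarrow> real" where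
  "eterm f p = b (fst p) (snd p) * (f (fst p) - f (snd p))\<^sup>2"
definition E :: "('a \<Rightarrow> real) \<Rightarrow> ennreal" where
  "E f = infsum (\<lambda>p. ennreal (eterm f p)) UNIV"

lemma energy_E: "energy b f = 1/2 * E f"
  by (simp add: energy_def E_def eterm_def)

lemma eterm_nonneg: "0 \<le> eterm f p"
  by (simp add: eterm_def b_nonneg)

lemma E_shift: "E (\<lambda>v. f v + c) = E f"
  by (simp add: E_def eterm_def)

lemma energy_shift: "energy b (\<lambda>v. f v + c) = energy b f"
  by (simp add: energy_E E_shift)

lemma E_scale: "E (\<lambda>v. c * f v) = ennreal (c\<^sup>2) * E f"
proof -
  have "ennreal (eterm (\<lambda>v. c * f v) p) = ennreal (c\<^sup>2) * ennreal (eterm f p)" for p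
  proof -
    have "eterm (\<lambda>v. c * f v) p = c\<^sup>2 * eterm f p"
      by (simp add: eterm_def power2_eq_square algebra_simps)
    then show ?thesis by (simp add: ennreal_mult eterm_nonneg)
  qed
  then show ?thesis unfolding E_def by (simp add: infsum_ennreal_cmult)
qed

lemma energy_scale: "energy b (\<lambda>v. c * f v) = ennreal (c\<^sup>2) * energy b f"
  by (simp add: energy_E E_scale mult.left_commute)

lemma edge_le:
  assumes "u \<noteq> v"
  shows "ennreal (b u v * (f u - f v)\<^sup>2) \<le> energy b f"
proof -
  let ?X = "ennreal (b u v * (f u - f v)\<^sup>2)"
  have s: "sum (\<lambda>p. ennreal (eterm f p)) {(u,v),(v,u)} = ?X + ?X"
    using assms by (simp add: eterm_def b_sym[of v u] power2_commute)
  have "sum (\<lambda>p. ennreal (eterm f p)) {(u,v),(v,u)} \<le> E f" unfolding E_def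
    by (rule sum_le_infsum_ennreal) simp
  then have "?X + ?X \<le> E f" using s by simp
  then have "1/2 * (?X + ?X) \<le> energy b f" by (simp add: energy_E mult_left_mono)
  moreover have "1/2 * (?X + ?X) = ?X"
    by (simp add: mult_2[symmetric] mult.assoc[symmetric] ennreal_divide_times)
  ultimately show ?thesis by simp
qed

lemma edge_le_real:
  assumes "energy b f \<le> ennreal M" "0 \<le> M"
  shows "b u v * (f u - f v)\<^sup>2 \<le> M"
proof (cases "u = v")
  case True then show ?thesis using assms by simp
next
  case False
  then have "ennreal (b u v * (f u - f v)\<^sup>2) \<le> ennreal M" using edge_le assms order_trans by blast
  then show ?thesis using assms by (simp add: ennreal_le_iff)
qed

lemma energy_zero_const:
  assumes "energy b f = 0"
  shows "f u = f v"
proof -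
  have e: "f p = f q" if "b p q > 0" for p q
  proof -
    have "b p q * (f p - f q)\<^sup>2 \<le> 0" using edge_le_real[of f 0 p q] assms by simp
    then have "(f p - f q)\<^sup>2 \<le> 0" using that by (simp add: mult_le_0_iff)
    then show ?thesis by simp
  qed
  show ?thesis using conn[of u v] by (induction rule: rtranclp_induct) (auto dest: e)
qed

lemma val_bound:
  "\<exists>C\<ge>0. \<forall>f M. 0 \<le> M \<longrightarrow> energy b f \<le> ennreal M \<longrightarrow> (f v - f x0)\<^sup>2 \<le> C * M"
  using conn[of x0 v]
proof (induction rule: rtranclp_induct)
  case base
  then show ?case by (intro exI[of _ 0]) simp
next
  case (step v v')
  then obtain C where C: "C \<ge> 0" "\<forall>f M. 0 \<le> M \<longrightarrow> energy b f \<le> ennreal M \<longrightarrow> (f v - f x0)\<^sup>2 \<le> C * M"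
    by blast
  define C' where "C' = 2*C + 2 / b v v'"
  have "C' \<ge> 0" using C step by (simp add: C'_def)
  moreover have "(f v' - f x0)\<^sup>2 \<le> C' * M" if "0 \<le> M" "energy b f \<le> ennreal M" for f M
  proof -
    have h1: "(f v - f x0)\<^sup>2 \<le> C * M" using C that by blast
    have "b v v' * (f v - f v')\<^sup>2 \<le> M" using edge_le_real that by blast
    moreover have "(f v' - f v)^2 = (f v - f v')^2" by (rule power2_commute)
    ultimately have h2: "(f v' - f v)\<^sup>2 \<le> M / b v v'" using step(2)
      by (subst pos_le_divide_eq) (auto simp: mult.commute)
    have "(f v' - f x0)\<^sup>2 \<le> 2 * (f v - f x0)\<^sup>2 + 2 * (f v' - f v)\<^sup>2"
    proof -
      have "0 \<le> ((f v - f x0) - (f v' - f v))\<^sup>2" by simp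
      then show ?thesis by (simp add: power2_eq_square algebra_simps)
    qed
    also have "\<dots> \<le> 2 * (C*M) + 2 * (M / b v v')" using h1 h2 by linarith
    also have "\<dots> = C' * M" by (simp add: C'_def algebra_simps)
    finally show ?thesis .
  qed
  ultimately show ?case by blast
qed

lemma E_fin_support:
  assumes "finite S" "\<And>p. p \<notin> S \<Longrightarrow> eterm f p = 0"
  shows "E f < \<infinity>"
proof -
  have "E f = sum (\<lambda>p. ennreal (eterm f p)) S + infsum (\<lambda>p. ennreal (eterm f p)) (-S)"
    unfolding E_def by (rule infsum_ennreal_split[OF assms(1)])
  also have "infsum (\<lambda>p. ennreal (eterm f p)) (-S) = 0"
    by (rule infsum_0) (simp add: assms(2))
  finally show ?thesis by (simp add: less_top[symmetric] sum_ennreal eterm_nonneg)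
qed

lemma energy_indicator_fin: "energy b (\<lambda>v. if v = x then 1 else 0) < \<infinity>"
proof -
  let ?N = "{y. b x y > 0}"
  let ?S = "({x} \<times> ?N) \<union> (?N \<times> {x})"
  have "finite ?S" using finN by auto
  moreover have "eterm (\<lambda>v. if v = x then 1 else 0) p = 0" if "p \<notin> ?S" for p
  proof -
    obtain p1 p2 where p: "p = (p1,p2)" by fastforce
    show ?thesis
    proof (cases "p1 = x \<or> p2 = x")
      case True
      then have "b p1 p2 = 0" using that p b_not_pos b_sym by auto
      then show ?thesis by (simp add: eterm_def p)
    qed (simp add: eterm_def p)
  qed
  ultimately have "E (\<lambda>v. if v = x then 1 else 0) < \<infinity>" by (rule E_fin_support)
  moreover have "(1/2::ennreal) < \<infinity>" by (simp add: ennreal_divide_eq_top_iff less_top[symmetric])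
  ultimately show ?thesis by (simp add: energy_E ennreal_mult_less_top)
qed

lemma R_ge:
  assumes "energy b g = ennreal q" "q > 0"
  shows "ennreal ((g y - g x)\<^sup>2 / q) \<le> resistance b x y"
proof -
  define h where "h = (\<lambda>v. (1 / sqrt q) * g v)"
  have "energy b h = ennreal ((1/sqrt q)\<^sup>2) * ennreal q" unfolding h_def energy_scale assms by simp
  also have "\<dots> = 1" using assms by (simp add: power_divide ennreal_mult[symmetric])
  finally have "energy b h = 1" .
  moreover have "(h y - h x)\<^sup>2 = (g y - g x)\<^sup>2 / q"
    using assms by (simp add: h_def power2_eq_square field_simps)
  ultimately show ?thesis unfolding resistance_def by (metis (mono_tags, lifting) Sup_upper mem_Collect_eq)
qed

lemma R_le:
  assumes "\<And>f. energy b f = 1 \<Longrightarrow> (f y - f x)\<^sup>2 \<le> c"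
  shows "resistance b x y \<le> ennreal c"
  unfolding resistance_def using assms by (auto intro!: Sup_least ennreal_leI)

lemma R_sym: "resistance b x y = resistance b y x"
  unfolding resistance_def by (simp add: power2_commute)

lemma R_refl[simp]: "resistance b x x = 0"
proof -
  have "resistance b x x \<le> ennreal 0" by (rule R_le) simp
  then show ?thesis by simp
qed

end

context gr begin

lemma E_energy: "E f = 2 * energy b f"
proof -
  have "2 * (1/2 * E f) = E f * 2 / 2" by (simp add: ennreal_times_divide mult.commute)
  also have "\<dots> = E f" by (rule mult_divide_eq_ennreal) simp_all
  finally show ?thesis by (simp add: energy_E)
qed

lemma energy_pos:
  assumes "energy b g = ennreal q" "g u \<noteq> g v"
  shows "q > 0"
proof (rule ccontr)
  assume "\<not> q > 0"
  then have "energy b g = 0" using assms(1) by (simp add: ennreal_eq_0_iff)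
  then have "g u = g v" by (rule energy_zero_const)
  then show False using assms(2) by simp
qed

lemma energy_normalize:
  assumes "f x \<noteq> f z"
  shows "energy b (\<lambda>v. (1 / (f x - f z)) * (f v + (- f z))) = ennreal ((1/(f x - f z))\<^sup>2) * energy b f"
  by (simp only: energy_scale energy_shift)

lemma minimizer:
  assumes "x \<noteq> z"
  shows "\<exists>\<psi>. \<psi> x = 1 \<and> \<psi> z = 0 \<and> energy b \<psi> < \<infinity> \<and>
           (\<forall>f. f x = 1 \<and> f z = 0 \<longrightarrow> energy b \<psi> \<le> energy b f)"
proof -
  define F where "F = {f::'a\<Rightarrow>real. f x = 1 \<and> f z = 0}"
  define m where "m = (INF f\<in>F. energy b f)"
  define e where "e = (\<lambda>v. if v = x then 1::real else 0)"
  have "e \<in> F" using assms by (simp add: F_def e_def)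
  then have "m \<le> energy b e" unfolding m_def by (rule INF_lower)
  then have mfin: "m < \<infinity>" using energy_indicator_fin[of x] unfolding e_def
    by (meson order.strict_trans1)
  have "\<exists>f\<in>F. energy b f < m + ennreal (1 / Suc n)" for n
  proof -
    have "m + 0 < m + ennreal (1 / Suc n)" using mfin
      by (subst ennreal_add_left_cancel_less) auto
    then show ?thesis unfolding m_def by (simp add: INF_less_iff)
  qed
  then obtain fs where fs: "\<And>n. fs n \<in> F" "\<And>n. energy b (fs n) < m + ennreal (1 / Suc n)"
    by metis
  define mr where "mr = enn2real m"
  have m_eq: "m = ennreal mr" using mfin by (simp add: mr_def ennreal_enn2real_if)
  have mr0: "mr \<ge> 0" by (simp add: mr_def)
  define M where "M = mr + 1"
  have M0: "M \<ge> 0" using mr0 by (simp add: M_def)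
  have fsM: "energy b (fs n) \<le> ennreal M" for n
  proof -
    have "m + ennreal (1 / Suc n) \<le> ennreal mr + ennreal 1"
      using m_eq by (intro add_mono) (auto simp: ennreal_leI)
    also have "\<dots> = ennreal M" using mr0 by (simp add: M_def)
    finally show ?thesis using fs(2)[of n] by simp
  qed
  have "\<forall>v. \<exists>C\<ge>0. \<forall>f M. 0 \<le> M \<longrightarrow> energy b f \<le> ennreal M \<longrightarrow> (f v - f z)\<^sup>2 \<le> C * M"
    using val_bound by blast
  then obtain C where C: "\<And>v. C v \<ge> 0"
    "\<And>v f M. 0 \<le> M \<Longrightarrow> energy b f \<le> ennreal M \<Longrightarrow> (f v - f z)\<^sup>2 \<le> C v * M"
    by metis
  define B where "B v = sqrt (C v * M)" for v
  define K where "K = Pi\<^sub>E UNIV (\<lambda>v. {- B v .. B v})"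
  have fsK: "fs n \<in> K" for n
  proof -
    have "\<bar>fs n v\<bar> \<le> B v" for v
    proof -
      have "(fs n v - fs n z)\<^sup>2 \<le> C v * M" using C(2) M0 fsM by blast
      then have "(fs n v)\<^sup>2 \<le> C v * M" using fs(1)[of n] by (simp add: F_def)
      then have "sqrt ((fs n v)\<^sup>2) \<le> B v" unfolding B_def by (rule real_sqrt_le_mono)
      then show ?thesis by simp
    qed
    then show ?thesis unfolding K_def PiE_UNIV_domain by (auto simp: abs_le_iff minus_le_iff)
  qed
  have "compactin (product_topology (\<lambda>_. euclidean) UNIV) K"
    unfolding K_def by (simp add: compactin_PiE)
  then have "compact K" by (simp add: euclidean_product_topology)
  then have "seq_compact K" by (rule compact_imp_seq_compact)
  then obtain l r where lK: "l \<in> K" and r: "strict_mono (r :: nat \<Rightarrow> nat)" and lim: "(fs \<circ> r) \<longlonglongrightarrow> l"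
    using fsK by (metis seq_compactE)
  have limv: "(\<lambda>k. fs (r k) v) \<longlonglongrightarrow> l v" for v
  proof -
    have "((\<lambda>f. f v) \<circ> (fs \<circ> r)) \<longlonglongrightarrow> l v"
      using continuous_on_tendsto_compose[OF continuous_on_product_coordinates lim] by (simp add: o_def)
    then show ?thesis by (simp add: o_def)
  qed
  have lx: "l x = 1"
  proof -
    have "(\<lambda>k. fs (r k) x) = (\<lambda>k. 1)" using fs(1) by (simp add: F_def)
    then have "(\<lambda>k. 1::real) \<longlonglongrightarrow> l x" using limv[of x] by simp
    then show ?thesis by (simp add: LIMSEQ_const_iff)
  qed
  have lz: "l z = 0"
  proof -
    have "(\<lambda>k. fs (r k) z) = (\<lambda>k. 0)" using fs(1) by (simp add: F_def)
    then have "(\<lambda>k. 0::real) \<longlonglongrightarrow> l z" using limv[of z] by simp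
    then show ?thesis by (simp add: LIMSEQ_const_iff)
  qed
  have El: "E l \<le> 2 * m"
  proof -
    have "E l = (SUP G\<in>{G. finite G \<and> G \<subseteq> UNIV}. sum (\<lambda>p. ennreal (eterm l p)) G)"
      unfolding E_def by (rule nonneg_infsum_complete) simp
    also have "\<dots> \<le> 2 * m"
    proof (rule SUP_least)
      fix G :: "('a \<times> 'a) set" assume "G \<in> {G. finite G \<and> G \<subseteq> UNIV}"
      then have G: "finite G" by simp
      have s: "sum (\<lambda>p. ennreal (eterm f p)) G = ennreal (sum (eterm f) G)" for f
        by (rule sum_ennreal) (simp add: eterm_nonneg)
      have conv: "(\<lambda>k. sum (eterm (fs (r k))) G) \<longlonglongrightarrow> sum (eterm l) G"
        unfolding eterm_def by (intro tendsto_intros limv)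
      have bnd: "sum (eterm (fs (r k))) G \<le> 2 * (mr + 1 / Suc k)" for k
      proof -
        have "ennreal (sum (eterm (fs (r k))) G) \<le> E (fs (r k))"
          unfolding s[symmetric] E_def by (rule sum_le_infsum_ennreal[OF G])
        also have "\<dots> = 2 * energy b (fs (r k))" by (rule E_energy)
        also have "\<dots> \<le> 2 * (m + ennreal (1 / Suc (r k)))"
          using fs(2)[of "r k"] by (intro mult_left_mono) auto
        also have "\<dots> \<le> 2 * (m + ennreal (1 / Suc k))"
        proof -
          have "k \<le> r k" using r by (rule seq_suble)
          then have "1 / real (Suc (r k)) \<le> 1 / Suc k" by (intro divide_left_mono) auto
          then have "ennreal (1 / real (Suc (r k))) \<le> ennreal (1 / Suc k)" by (rule ennreal_leI)
          then show ?thesis by (rule mult_left_mono[OF add_left_mono]) simp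
        qed
        also have "\<dots> = ennreal (2 * (mr + 1 / Suc k))"
        proof -
          have "ennreal (2 * (mr + 1 / Suc k)) = ennreal 2 * ennreal (mr + 1/Suc k)"
            by (rule ennreal_mult) (use mr0 in auto)
          also have "ennreal (mr + 1/Suc k) = ennreal mr + ennreal (1/Suc k)"
            by (rule ennreal_plus) (use mr0 in auto)
          finally show ?thesis using m_eq by simp
        qed
        finally have X: "ennreal (sum (eterm (fs (r k))) G) \<le> ennreal (2 * (mr + 1 / Suc k))" .
        have nn: "0 \<le> 2 * (mr + 1 / Suc k)" using mr0 by simp
        show ?thesis using X ennreal_le_iff[OF nn] by blast
      qed
      have conv2: "(\<lambda>k. 2 * (mr + 1 / real (Suc k))) \<longlonglongrightarrow> 2 * (mr + 0)"
        using LIMSEQ_inverse_real_of_nat by (intro tendsto_intros) (simp add: inverse_eq_divide)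
      have "sum (eterm l) G \<le> 2 * (mr + 0)"
        using LIMSEQ_le[OF conv conv2] bnd by blast
      then have "ennreal (sum (eterm l) G) \<le> ennreal (2 * mr)" by (intro ennreal_leI) simp
      also have "\<dots> = 2 * m" using m_eq mr0 by (simp add: ennreal_mult)
      finally show "sum (\<lambda>p. ennreal (eterm l p)) G \<le> 2 * m" using s by simp
    qed
    finally show ?thesis .
  qed
  have lm: "energy b l \<le> m"
  proof -
    have "2 * energy b l \<le> 2 * m" using El E_energy by simp
    then show ?thesis by (simp add: ennreal_mult_le_mult_iff)
  qed
  show ?thesis
  proof (intro exI conjI allI impI)
    show "l x = 1" by (fact lx)
    show "l z = 0" by (fact lz)
    show "energy b l < \<infinity>" using lm mfin by (rule order.strict_trans1)
    fix f :: "'a \<Rightarrow> real" assume "f x = 1 \<and> f z = 0"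
    then have "f \<in> F" by (simp add: F_def)
    then have "m \<le> energy b f" unfolding m_def by (rule INF_lower)
    then show "energy b l \<le> energy b f" using lm by simp
  qed
qed

lemma R_min:
  assumes px: "\<psi> x = 1" and pz: "\<psi> z = 0" and pe: "energy b \<psi> = ennreal Q"
    and pm: "\<forall>f. f x = 1 \<and> f z = 0 \<longrightarrow> energy b \<psi> \<le> energy b f"
  shows "Q > 0" "resistance b x z = ennreal (1/Q)"
proof -
  show Q: "Q > 0" using energy_pos[OF pe, of x z] px pz by simp
  have "ennreal ((\<psi> z - \<psi> x)\<^sup>2 / Q) \<le> resistance b x z" by (rule R_ge[OF pe Q])
  then have ge: "ennreal (1/Q) \<le> resistance b x z" using px pz by simp
  have le: "resistance b x z \<le> ennreal (1/Q)"
  proof (rule R_le)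
    fix f assume f1: "energy b f = 1"
    show "(f z - f x)\<^sup>2 \<le> 1 / Q"
    proof (cases "f x = f z")
      case True then show ?thesis using Q by simp
    next
      case False
      define g where "g = (\<lambda>v. (1 / (f x - f z)) * (f v + (- f z)))"
      have "g x = 1" "g z = 0" using False by (simp_all add: g_def)
      then have "energy b \<psi> \<le> energy b g" using pm by blast
      also have "energy b g = ennreal ((1/(f x - f z))\<^sup>2)"
        unfolding g_def energy_normalize[OF False] f1 by simp
      finally have "Q \<le> (1/(f x - f z))\<^sup>2" using pe by (simp add: ennreal_le_iff)
      then have "Q \<le> 1 / (f z - f x)\<^sup>2" by (simp add: power_divide power2_commute)
      moreover have "(f z - f x)\<^sup>2 > 0" using False by simp
      ultimately show ?thesis using Q by (simp add: field_simps)
    qed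
  qed
  show "resistance b x z = ennreal (1/Q)" using ge le by simp
qed

lemma minimizer':
  assumes "x \<noteq> z"
  obtains \<psi> Q where "\<psi> x = 1" "\<psi> z = 0" "energy b \<psi> = ennreal Q" "Q > 0"
    "resistance b x z = ennreal (1/Q)"
proof -
  obtain \<psi> where p: "\<psi> x = 1" "\<psi> z = 0" "energy b \<psi> < \<infinity>"
    "\<forall>f. f x = 1 \<and> f z = 0 \<longrightarrow> energy b \<psi> \<le> energy b f"
    using minimizer[OF assms] by blast
  define Q where "Q = enn2real (energy b \<psi>)"
  have e: "energy b \<psi> = ennreal Q" using p(3) by (simp add: Q_def ennreal_enn2real_if)
  show ?thesis using R_min[OF p(1,2) e p(4)] p e that by blast
qed

definition r :: "'a \<Rightarrow> 'a \<Rightarrow> real" where "r x y = enn2real (resistance b x y)"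

lemma R_fin: "resistance b x y = ennreal (r x y)"
proof (cases "x = y")
  case True then show ?thesis by (simp add: r_def)
next
  case False
  then obtain \<psi> Q where "resistance b x y = ennreal (1/Q)" "Q > 0" using minimizer' by metis
  then show ?thesis by (simp add: r_def)
qed

lemma r_nonneg: "r x y \<ge> 0" by (simp add: r_def)

lemma r_sym: "r x y = r y x" by (simp add: r_def R_sym)

lemma r_refl[simp]: "r x x = 0" by (simp add: r_def)

lemma r_ge:
  assumes "energy b g = ennreal q" "q > 0"
  shows "(g y - g x)\<^sup>2 / q \<le> r x y"
  using R_ge[OF assms, of y x] R_fin[of x y] by (simp add: ennreal_le_iff r_nonneg)

lemma r_min:
  assumes "x \<noteq> z"
  obtains \<psi> Q where "\<psi> x = 1" "\<psi> z = 0" "energy b \<psi> = ennreal Q" "Q > 0" "r x z = 1/Q"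
proof -
  obtain \<psi> Q where "\<psi> x = 1" "\<psi> z = 0" "energy b \<psi> = ennreal Q" "Q > 0"
    "resistance b x z = ennreal (1/Q)" using minimizer'[OF assms] by metis
  then show ?thesis using that by (simp add: r_def)
qed

lemma r_pos: "x \<noteq> y \<Longrightarrow> r x y > 0"
  by (metis r_min divide_pos_pos zero_less_one)

end

lemma half_lt_top: "(1/2::ennreal) < \<infinity>"
  by (simp add: ennreal_divide_eq_top_iff less_top[symmetric])

context gr begin

lemma energy_local_change:
  assumes P: "finite P" and out: "\<And>p. p \<notin> P \<Longrightarrow> eterm g p = eterm f p"
    and fin: "energy b f < \<infinity>" and lt: "sum (eterm g) P < sum (eterm f) P"
  shows "energy b g < energy b f"
proof -
  define T where "T = infsum (\<lambda>p. ennreal (eterm f p)) (-P)"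
  have Ef: "E f = ennreal (sum (eterm f) P) + T"
    unfolding E_def T_def using infsum_ennreal_split[OF P, of "\<lambda>p. ennreal (eterm f p)"]
    by (simp add: sum_ennreal eterm_nonneg)
  have "infsum (\<lambda>p. ennreal (eterm g p)) (-P) = T"
    unfolding T_def by (rule infsum_cong) (simp add: out)
  then have Eg: "E g = ennreal (sum (eterm g) P) + T"
    unfolding E_def using infsum_ennreal_split[OF P, of "\<lambda>p. ennreal (eterm g p)"]
    by (simp add: sum_ennreal eterm_nonneg)
  have "E f < \<infinity>" using fin by (simp add: E_energy ennreal_mult_less_top)
  then have Tfin: "T \<noteq> \<infinity>" using Ef by (auto simp: top_unique)
  have "ennreal (sum (eterm g) P) < ennreal (sum (eterm f) P)"
  proof -
    have "0 \<le> sum (eterm g) P" by (simp add: sum_nonneg eterm_nonneg)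
    then show ?thesis using lt by (intro ennreal_lessI) linarith+
  qed
  then have "T + ennreal (sum (eterm g) P) < T + ennreal (sum (eterm f) P)"
    using Tfin by (subst ennreal_add_left_cancel_less) simp
  then have "E g < E f" using Ef Eg by (simp add: add.commute)
  then have "1/2 * E g < 1/2 * E f"
    by (rule ennreal_mult_strict_left_mono) (simp_all add: half_lt_top[unfolded infinity_ennreal_def] ennreal_zero_less_divide)
  then show ?thesis by (simp add: energy_E)
qed

lemma perturb_decrease:
  assumes fin: "energy b f < \<infinity>"
    and S: "(\<Sum>w\<in>{w. b v w > 0}. b v w * (f v - f w)) < 0"
  shows "\<exists>\<epsilon>. energy b (\<lambda>u. f u + (if u = v then \<epsilon> else 0)) < energy b f"
proof -
  define N where "N = {w. b v w > 0}"
  have Nfin: "finite N" using finN by (simp add: N_def)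
  have vN: "v \<notin> N" by (simp add: N_def)
  define Sm where "Sm = (\<Sum>w\<in>N. b v w * (f v - f w))"
  define D where "D = (\<Sum>w\<in>N. b v w)"
  have Sm: "Sm < 0" using S by (simp add: Sm_def N_def)
  have "N \<noteq> {}" using Sm by (auto simp: Sm_def)
  then have D: "D > 0" unfolding D_def using Nfin by (intro sum_pos) (auto simp: N_def)
  define \<epsilon> where "\<epsilon> = - Sm / D"
  define g where "g = (\<lambda>u. f u + (if u = v then \<epsilon> else 0))"
  define P where "P = ((\<lambda>w. (v,w)) ` N) \<union> ((\<lambda>w. (w,v)) ` N)"
  have Pfin: "finite P" using Nfin by (simp add: P_def)
  have out: "eterm g p = eterm f p" if "p \<notin> P" for p
  proof -
    obtain p1 p2 where p: "p = (p1,p2)" by fastforce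
    show ?thesis
    proof (cases "p1 = v \<or> p2 = v")
      case True
      have "\<not> b p1 p2 > 0"
      proof
        assume pos: "b p1 p2 > 0"
        then have "b p2 p1 > 0" using b_sym[of p1 p2] by simp
        then show False using True pos that p unfolding P_def N_def by auto
      qed
      then have "b p1 p2 = 0" by (rule b_not_pos)
      then show ?thesis by (simp add: eterm_def p)
    next
      case False then show ?thesis by (simp add: eterm_def p g_def)
    qed
  qed
  have disj: "((\<lambda>w. (v,w)) ` N) \<inter> ((\<lambda>w. (w,v)) ` N) = {}" using vN by auto
  have sumP: "sum h P = (\<Sum>w\<in>N. h (v,w)) + (\<Sum>w\<in>N. h (w,v))" for h :: "'a \<times> 'a \<Rightarrow> real"
  proof -
    have "sum h P = sum h ((\<lambda>w. (v,w)) ` N) + sum h ((\<lambda>w. (w,v)) ` N)"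
      unfolding P_def using Nfin disj by (intro sum.union_disjoint) auto
    also have "sum h ((\<lambda>w. (v,w)) ` N) = (\<Sum>w\<in>N. h (v,w))"
      by (subst sum.reindex) (auto simp: inj_on_def)
    also have "sum h ((\<lambda>w. (w,v)) ` N) = (\<Sum>w\<in>N. h (w,v))"
      by (subst sum.reindex) (auto simp: inj_on_def)
    finally show ?thesis .
  qed
  have t1: "eterm g (v,w) = eterm f (v,w) + b v w * (2 * \<epsilon> * (f v - f w) + \<epsilon>\<^sup>2)" if "w \<in> N" for w
    using that vN by (auto simp: eterm_def g_def power2_eq_square algebra_simps)
  have t2: "eterm g (w,v) = eterm f (w,v) + b v w * (2 * \<epsilon> * (f v - f w) + \<epsilon>\<^sup>2)" if "w \<in> N" for w
    using that vN by (auto simp: eterm_def g_def power2_eq_square algebra_simps b_sym[of w v])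
  have "sum (eterm g) P = sum (eterm f) P + 2 * (\<Sum>w\<in>N. b v w * (2 * \<epsilon> * (f v - f w) + \<epsilon>\<^sup>2))"
    unfolding sumP by (simp add: t1 t2 sum.distrib)
  also have "(\<Sum>w\<in>N. b v w * (2 * \<epsilon> * (f v - f w) + \<epsilon>\<^sup>2)) = 2 * \<epsilon> * Sm + \<epsilon>\<^sup>2 * D"
  proof -
    have "(\<Sum>w\<in>N. b v w * (2 * \<epsilon> * (f v - f w) + \<epsilon>\<^sup>2)) = (\<Sum>w\<in>N. 2 * \<epsilon> * (b v w * (f v - f w)) + \<epsilon>\<^sup>2 * b v w)"
      by (rule sum.cong) (simp_all add: algebra_simps)
    also have "\<dots> = 2 * \<epsilon> * Sm + \<epsilon>\<^sup>2 * D"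
      by (simp add: sum.distrib sum_distrib_left Sm_def D_def)
    finally show ?thesis .
  qed
  also have "2 * \<epsilon> * Sm + \<epsilon>\<^sup>2 * D = - (Sm\<^sup>2 / D)"
    using D by (simp add: \<epsilon>_def power2_eq_square field_simps)
  finally have "sum (eterm g) P = sum (eterm f) P - 2 * (Sm\<^sup>2 / D)" by simp
  moreover have "Sm\<^sup>2 / D > 0" using Sm D by simp
  ultimately have "sum (eterm g) P < sum (eterm f) P" by simp
  then have "energy b g < energy b f" using energy_local_change[of P g f] Pfin out fin by blast
  then show ?thesis unfolding g_def by blast
qed

definition avoid :: "'a \<Rightarrow> 'a \<Rightarrow> 'a \<Rightarrow> bool" where
  "avoid y u v \<longleftrightarrow> b u v > 0 \<and> u \<noteq> y \<and> v \<noteq> y"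

lemma avoid_ne: "(avoid y)\<^sup>*\<^sup>* x v \<Longrightarrow> x \<noteq> y \<Longrightarrow> v \<noteq> y"
  by (induction rule: rtranclp_induct) (auto simp: avoid_def)

lemma energy_split_le:
  assumes "\<And>p. eterm f1 p + eterm f2 p \<le> eterm f p"
  shows "energy b f1 + energy b f2 \<le> energy b f"
proof -
  have "E f1 + E f2 \<le> E f"
    unfolding E_def infsum_ennreal_add[symmetric]
    by (rule infsum_ennreal_mono) (simp add: assms eterm_nonneg ennreal_plus[symmetric] del: ennreal_plus)
  then show ?thesis unfolding energy_E distrib_left[symmetric] by (rule mult_left_mono) simp
qed

end

context gr begin

lemma fin_energy_real:
  assumes "energy b f < \<infinity>"
  shows "energy b f = ennreal (enn2real (energy b f))"
  using assms by (simp add: ennreal_enn2real_if)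

lemma tri_main:
  assumes xz: "x \<noteq> z"
  shows "r x z \<le> r x y + r y z \<and>
         (y \<noteq> x \<and> y \<noteq> z \<and> (avoid y)\<^sup>*\<^sup>* x z \<longrightarrow> r x z < r x y + r y z)"
proof -
  obtain \<psi> Q where px: "\<psi> x = 1" and pz: "\<psi> z = 0" and pe: "energy b \<psi> = ennreal Q"
    and Q: "Q > 0" and rxz: "r x z = 1/Q"
    using r_min[OF xz] by metis
  define t where "t = \<psi> y"
  have lb1: "(t - 1)\<^sup>2 / Q \<le> r x y" using r_ge[OF pe Q, of y x] px by (simp add: t_def)
  have lb2: "t\<^sup>2 / Q \<le> r y z" using r_ge[OF pe Q, of z y] pz by (simp add: t_def)
  have rxy0: "r x y \<ge> 0" "r y z \<ge> 0" by (simp_all add: r_nonneg)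
  consider "t \<ge> 1" | "t \<le> 0" | "0 < t" "t < 1" by linarith
  then show ?thesis
  proof cases
    case 1
    then have "1 \<le> t\<^sup>2" by (simp add: one_le_power)
    then have "1 / Q \<le> t\<^sup>2 / Q" using Q by (simp add: divide_right_mono)
    then have ge: "r x z \<le> r y z" using lb2 rxz by linarith
    moreover have "y \<noteq> x \<longrightarrow> r x y > 0" using r_pos[of x y] by auto
    ultimately show ?thesis using rxy0 by auto
  next
    case 2
    then have "1 \<le> 1 - t" by simp
    then have "1 * 1 \<le> (1 - t) * (1 - t)" by (intro mult_mono) auto
    then have "1 \<le> (t - 1)\<^sup>2" by (simp add: power2_eq_square algebra_simps)
    then have "1 / Q \<le> (t - 1)\<^sup>2 / Q" using Q by (simp add: divide_right_mono)
    then have ge: "r x z \<le> r x y" using lb1 rxz by linarith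
    moreover have "y \<noteq> z \<longrightarrow> r y z > 0" using r_pos[of y z] by auto
    ultimately show ?thesis using rxy0 by auto
  next
    case 3
    define \<psi>1 where "\<psi>1 = (\<lambda>v. max (\<psi> v) t)"
    define \<psi>2 where "\<psi>2 = (\<lambda>v. min (\<psi> v) t)"
    have pw: "eterm \<psi>1 p + eterm \<psi>2 p \<le> eterm \<psi> p" for p
    proof -
      have "b (fst p) (snd p) * ((\<psi>1 (fst p) - \<psi>1 (snd p))\<^sup>2 + (\<psi>2 (fst p) - \<psi>2 (snd p))\<^sup>2)
            \<le> b (fst p) (snd p) * (\<psi> (fst p) - \<psi> (snd p))\<^sup>2"
        unfolding \<psi>1_def \<psi>2_def by (intro mult_left_mono sq_split_ineq b_nonneg)
      then show ?thesis by (simp add: eterm_def distrib_left)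
    qed
    have split: "energy b \<psi>1 + energy b \<psi>2 \<le> energy b \<psi>" by (rule energy_split_le[OF pw])
    then have fin1: "energy b \<psi>1 < \<infinity>" and fin2: "energy b \<psi>2 < \<infinity>" using pe
      by (auto simp: top_unique less_top[symmetric] ennreal_add_eq_top)
    define Q1 where "Q1 = enn2real (energy b \<psi>1)"
    define Q2 where "Q2 = enn2real (energy b \<psi>2)"
    have e1: "energy b \<psi>1 = ennreal Q1" using fin1 by (simp add: Q1_def fin_energy_real[symmetric])
    have e2: "energy b \<psi>2 = ennreal Q2" using fin2 by (simp add: Q2_def fin_energy_real[symmetric])
    have q0: "Q1 \<ge> 0" "Q2 \<ge> 0" by (simp_all add: Q1_def Q2_def)
    have "ennreal (Q1 + Q2) = ennreal Q1 + ennreal Q2" using q0 by simp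
    also have "\<dots> \<le> ennreal Q" using split e1 e2 pe by simp
    finally have Q1Q2: "Q1 + Q2 \<le> Q" using Q by (simp add: ennreal_le_iff)
    have p1x: "\<psi>1 x = 1" "\<psi>1 y = t" using px 3 by (simp_all add: \<psi>1_def t_def)
    have p2z: "\<psi>2 z = 0" "\<psi>2 y = t" using pz 3 by (simp_all add: \<psi>2_def t_def)
    have Q1p: "Q1 > 0" using energy_pos[OF e1, of x y] p1x 3 by simp
    have Q2p: "Q2 > 0" using energy_pos[OF e2, of y z] p2z 3 by simp
    have lb1': "(1 - t)\<^sup>2 / Q1 \<le> r x y"
      using r_ge[OF e1 Q1p, of y x] p1x by (simp add: power2_commute)
    have lb2': "t\<^sup>2 / Q2 \<le> r y z"
      using r_ge[OF e2 Q2p, of z y] p2z by simp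
    have cs: "1 / (Q1 + Q2) \<le> (1 - t)\<^sup>2 / Q1 + t\<^sup>2 / Q2"
      using cs_ineq[OF Q1p Q2p, of "1 - t" t] by simp
    have qq: "1 / Q \<le> 1 / (Q1 + Q2)" using Q1p Q2p Q1Q2 by (simp add: divide_left_mono)
    have weak: "r x z \<le> r x y + r y z" using cs qq lb1' lb2' rxz by linarith
    have strict: "r x z < r x y + r y z" if yx: "y \<noteq> x" and yz: "y \<noteq> z" and path: "(avoid y)\<^sup>*\<^sup>* x z"
    proof -
      obtain u v where uv: "avoid y u v" "\<psi> u > t" "\<not> \<psi> v > t"
        using path_cross[OF path, of "\<lambda>w. \<psi> w > t"] px pz 3 by auto
      have buv: "b u v > 0" "u \<noteq> y" "v \<noteq> y" using uv(1) by (auto simp: avoid_def)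
      show ?thesis
      proof (cases "\<psi> v < t")
        case True
        define gap where "gap = 2 * b u v * (\<psi> u - t) * (t - \<psi> v)"
        have gap: "gap > 0" using True uv buv by (simp add: gap_def)
        define \<psi>3 where "\<psi>3 = (\<lambda>w. if w = (u,v) then gap else 0)"
        have pw3: "eterm \<psi>1 p + eterm \<psi>2 p + \<psi>3 p \<le> eterm \<psi> p" for p
        proof (cases "p = (u,v)")
          case True
          have "(\<psi>1 u - \<psi>1 v)\<^sup>2 + (\<psi>2 u - \<psi>2 v)\<^sup>2 + 2*(\<psi> u - t)*(t - \<psi> v) = (\<psi> u - \<psi> v)\<^sup>2"
            unfolding \<psi>1_def \<psi>2_def by (rule sq_split_strict) (use uv \<open>\<psi> v < t\<close> in auto)
          then have "b u v * ((\<psi>1 u - \<psi>1 v)\<^sup>2 + (\<psi>2 u - \<psi>2 v)\<^sup>2 + 2*(\<psi> u - t)*(t - \<psi> v)) = b u v * (\<psi> u - \<psi> v)\<^sup>2"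
            by simp
          then show ?thesis using True by (simp add: eterm_def \<psi>3_def gap_def algebra_simps)
        next
          case False then show ?thesis using pw[of p] by (simp add: \<psi>3_def)
        qed
        have "E \<psi>1 + E \<psi>2 + ennreal gap \<le> E \<psi>"
        proof -
          have "infsum (\<lambda>p. ennreal (\<psi>3 p)) UNIV = ennreal gap"
          proof -
            have "infsum (\<lambda>p. ennreal (\<psi>3 p)) UNIV = sum (\<lambda>p. ennreal (\<psi>3 p)) {(u,v)} + infsum (\<lambda>p. ennreal (\<psi>3 p)) (-{(u,v)})"
              by (rule infsum_ennreal_split) simp
            also have "infsum (\<lambda>p. ennreal (\<psi>3 p)) (-{(u,v)}) = 0"
              by (rule infsum_0) (simp add: \<psi>3_def)
            finally show ?thesis by (simp add: \<psi>3_def)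
          qed
          moreover have "infsum (\<lambda>p. ennreal (eterm \<psi>1 p) + ennreal (eterm \<psi>2 p) + ennreal (\<psi>3 p)) UNIV \<le> E \<psi>"
            unfolding E_def
          proof (rule infsum_ennreal_mono)
            fix p
            have "0 \<le> \<psi>3 p" using gap by (simp add: \<psi>3_def)
            then show "ennreal (eterm \<psi>1 p) + ennreal (eterm \<psi>2 p) + ennreal (\<psi>3 p) \<le> ennreal (eterm \<psi> p)"
              using pw3[of p] eterm_nonneg[of \<psi>1 p] eterm_nonneg[of \<psi>2 p]
              by (simp add: ennreal_plus[symmetric] del: ennreal_plus)
          qed
          ultimately show ?thesis unfolding E_def infsum_ennreal_add by simp
        qed
        then have "2 * energy b \<psi>1 + 2 * energy b \<psi>2 + ennreal gap \<le> 2 * energy b \<psi>"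
          by (simp add: E_energy)
        then have "ennreal (2 * Q1 + 2 * Q2 + gap) \<le> ennreal (2 * Q)"
          using e1 e2 pe Q1p Q2p gap Q by (simp add: ennreal_mult)
        then have "2 * Q1 + 2 * Q2 + gap \<le> 2 * Q" using Q by (simp add: ennreal_le_iff)
        then have "Q1 + Q2 < Q" using gap by linarith
        then have "1 / Q < 1 / (Q1 + Q2)" using Q1p Q2p by (simp add: divide_strict_left_mono)
        then show ?thesis using cs lb1' lb2' rxz by linarith
      next
        case False
        then have pv: "\<psi> v = t" using uv by linarith
        have vx: "v \<noteq> x" using pv px 3 by auto
        have S: "(\<Sum>w\<in>{w. b v w > 0}. b v w * (\<psi>1 v - \<psi>1 w)) < 0"
        proof -
          let ?N = "{w. b v w > 0}"
          have uN: "u \<in> ?N" using buv b_sym[of u v] by simp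
          have le: "b v w * (\<psi>1 v - \<psi>1 w) \<le> 0" for w
            using b_nonneg[of v w] pv by (intro mult_nonneg_nonpos) (auto simp: \<psi>1_def)
          have lt: "b v u * (\<psi>1 v - \<psi>1 u) < 0"
            using uN uv pv by (intro mult_pos_neg) (auto simp: \<psi>1_def)
          have "(\<Sum>w\<in>?N. b v w * (\<psi>1 v - \<psi>1 w)) = b v u * (\<psi>1 v - \<psi>1 u) + (\<Sum>w\<in>?N - {u}. b v w * (\<psi>1 v - \<psi>1 w))"
            using uN finN[of v] by (simp add: sum.remove)
          also have "(\<Sum>w\<in>?N - {u}. b v w * (\<psi>1 v - \<psi>1 w)) \<le> 0"
            by (rule sum_nonpos) (simp add: le)
          finally show ?thesis using lt by linarith
        qed
        obtain \<epsilon> where eps: "energy b (\<lambda>w. \<psi>1 w + (if w = v then \<epsilon> else 0)) < energy b \<psi>1"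
          using perturb_decrease[OF fin1 S] by blast
        define \<phi> where "\<phi> = (\<lambda>w. \<psi>1 w + (if w = v then \<epsilon> else 0))"
        have finphi: "energy b \<phi> < \<infinity>" using eps fin1 unfolding \<phi>_def by (meson order.strict_trans)
        define Q3 where "Q3 = enn2real (energy b \<phi>)"
        have e3: "energy b \<phi> = ennreal Q3" using finphi by (simp add: Q3_def fin_energy_real[symmetric])
        have phx: "\<phi> x = 1" "\<phi> y = t" using p1x vx buv by (simp_all add: \<phi>_def)
        have Q3p: "Q3 > 0" using energy_pos[OF e3, of x y] phx 3 by simp
        have Q3Q1: "Q3 < Q1" using eps e1 e3 unfolding \<phi>_def[symmetric] using Q1p Q3p
          by (simp add: ennreal_less_iff)
        have lb3: "(1 - t)\<^sup>2 / Q3 \<le> r x y"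
          using r_ge[OF e3 Q3p, of y x] phx by (simp add: power2_commute)
        have "(1 - t)\<^sup>2 / Q1 < (1 - t)\<^sup>2 / Q3"
          using Q3p Q3Q1 3 by (intro divide_strict_left_mono) auto
        then show ?thesis using cs qq lb3 lb2' rxz by linarith
      qed
    qed
    show ?thesis using weak strict by blast
  qed
qed

lemma r_tri: "r x z \<le> r x y + r y z"
  using tri_main[of x z y] r_nonneg[of x y] r_nonneg[of y z]
  by (cases "x = z") auto

lemma r_tri_strict:
  assumes "y \<noteq> x" "y \<noteq> z" "(avoid y)\<^sup>*\<^sup>* x z"
  shows "r x z < r x y + r y z"
proof (cases "x = z")
  case True then show ?thesis using assms r_pos[of x y] r_nonneg[of y z] by simp
next
  case False then show ?thesis using tri_main[OF False, of y] assms by blast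
qed

end

context gr begin

lemma r_add_sep:
  assumes xy: "x \<noteq> y" and yz: "y \<noteq> z" and sep: "\<not> (avoid y)\<^sup>*\<^sup>* x z"
  shows "r x z = r x y + r y z"
proof -
  obtain \<psi> Q where px: "\<psi> x = 1" and py: "\<psi> y = 0" and pe: "energy b \<psi> = ennreal Q"
    and Q: "Q > 0" and rxy: "r x y = 1/Q"
    using r_min[OF xy] by metis
  obtain \<phi> Q' where fy: "\<phi> y = 1" and fz: "\<phi> z = 0" and fe: "energy b \<phi> = ennreal Q'"
    and Q': "Q' > 0" and ryz: "r y z = 1/Q'"
    using r_min[OF yz] by metis
  define A where "A = {v. (avoid y)\<^sup>*\<^sup>* x v}"
  define \<alpha> where "\<alpha> = 1/Q"
  define \<beta> where "\<beta> = 1/Q'"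
  have al: "\<alpha> > 0" "\<beta> > 0" using Q Q' by (simp_all add: \<alpha>_def \<beta>_def)
  define g where "g v = (if v \<in> A then \<alpha> * \<psi> v else \<beta> * (\<phi> v - 1))" for v
  have Ax: "x \<in> A" by (simp add: A_def)
  have Az: "z \<notin> A" using sep by (simp add: A_def)
  have Ay: "y \<notin> A" using avoid_ne[of y x y] xy by (auto simp: A_def)
  have closed: "v \<in> A" if "u \<in> A" "b u v > 0" "v \<noteq> y" for u v
  proof -
    have "u \<noteq> y" using that(1) Ay by auto
    then have "avoid y u v" using that by (simp add: avoid_def)
    then show ?thesis using that(1) by (auto simp: A_def intro: rtranclp.rtrancl_into_rtrancl)
  qed
  have gy: "g y = \<alpha> * \<psi> y" using Ay fy py by (simp add: g_def)
  have pw: "eterm g p = \<alpha>\<^sup>2 * eterm \<psi> p \<or> eterm g p = \<beta>\<^sup>2 * eterm \<phi> p" for p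
  proof -
    obtain p1 p2 where p: "p = (p1,p2)" by fastforce
    have inA: "eterm g p = \<alpha>\<^sup>2 * eterm \<psi> p" if "g p1 = \<alpha> * \<psi> p1" "g p2 = \<alpha> * \<psi> p2"
      using that by (simp add: eterm_def p power2_eq_square algebra_simps)
    have outA: "eterm g p = \<beta>\<^sup>2 * eterm \<phi> p" if "p1 \<notin> A" "p2 \<notin> A"
      using that by (simp add: eterm_def p g_def power2_eq_square algebra_simps)
    consider "p1 \<in> A" "p2 \<in> A" | "p1 \<notin> A" "p2 \<notin> A" | "p1 \<in> A" "p2 \<notin> A" | "p1 \<notin> A" "p2 \<in> A" by blast
    then show ?thesis
    proof cases
      case 1 then show ?thesis using inA by (simp add: g_def)
    next
      case 2 then show ?thesis using outA by simp
    next
      case 3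
      show ?thesis
      proof (cases "b p1 p2 > 0")
        case True
        then have "p2 = y" using closed[OF 3(1) True] 3 by auto
        then show ?thesis using inA 3 gy by (simp add: g_def)
      next
        case False
        then have "b p1 p2 = 0" by (rule b_not_pos)
        then show ?thesis by (simp add: eterm_def p)
      qed
    next
      case 4
      show ?thesis
      proof (cases "b p2 p1 > 0")
        case True
        then have "p1 = y" using closed[OF 4(2) True] 4 by auto
        then show ?thesis using inA 4 gy by (simp add: g_def)
      next
        case False
        then have "b p1 p2 = 0" using b_not_pos b_sym by metis
        then show ?thesis by (simp add: eterm_def p)
      qed
    qed
  qed
  have pw2: "ennreal (eterm g p) \<le> ennreal (\<alpha>\<^sup>2) * ennreal (eterm \<psi> p) + ennreal (\<beta>\<^sup>2) * ennreal (eterm \<phi> p)" for p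
  proof -
    have "eterm g p \<le> \<alpha>\<^sup>2 * eterm \<psi> p + \<beta>\<^sup>2 * eterm \<phi> p"
      using pw[of p] eterm_nonneg[of \<psi> p] eterm_nonneg[of \<phi> p] by auto
    then have "ennreal (eterm g p) \<le> ennreal (\<alpha>\<^sup>2 * eterm \<psi> p + \<beta>\<^sup>2 * eterm \<phi> p)" by (rule ennreal_leI)
    also have "\<dots> = ennreal (\<alpha>\<^sup>2) * ennreal (eterm \<psi> p) + ennreal (\<beta>\<^sup>2) * ennreal (eterm \<phi> p)"
      by (simp add: eterm_nonneg ennreal_mult)
    finally show ?thesis .
  qed
  have "E g \<le> ennreal (\<alpha>\<^sup>2) * E \<psi> + ennreal (\<beta>\<^sup>2) * E \<phi>"
    unfolding E_def infsum_ennreal_cmult[symmetric] infsum_ennreal_add[symmetric]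
    by (rule infsum_ennreal_mono) (rule pw2)
  then have "1/2 * E g \<le> 1/2 * (ennreal (\<alpha>\<^sup>2) * E \<psi> + ennreal (\<beta>\<^sup>2) * E \<phi>)"
    by (rule mult_left_mono) simp
  then have "energy b g \<le> ennreal (\<alpha>\<^sup>2) * energy b \<psi> + ennreal (\<beta>\<^sup>2) * energy b \<phi>"
    by (simp add: energy_E distrib_left mult.left_commute)
  also have "\<dots> = ennreal (\<alpha>\<^sup>2 * Q + \<beta>\<^sup>2 * Q')"
    using Q Q' pe fe by (simp add: ennreal_mult)
  also have "\<alpha>\<^sup>2 * Q + \<beta>\<^sup>2 * Q' = \<alpha> + \<beta>"
    using Q Q' by (simp add: \<alpha>_def \<beta>_def power2_eq_square)
  finally have ge: "energy b g \<le> ennreal (\<alpha> + \<beta>)" .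
  then have gfin: "energy b g < \<infinity>" using le_less_trans by fastforce
  define q where "q = enn2real (energy b g)"
  have eg: "energy b g = ennreal q" using gfin by (simp add: q_def fin_energy_real[symmetric])
  have gx: "g x = \<alpha>" using Ax px by (simp add: g_def)
  have gz: "g z = - \<beta>" using Az fz by (simp add: g_def)
  have qp: "q > 0" using energy_pos[OF eg, of x z] gx gz al by simp
  have qle: "q \<le> \<alpha> + \<beta>"
  proof -
    have nn: "0 \<le> \<alpha> + \<beta>" using al by simp
    show ?thesis using ge eg ennreal_le_iff[OF nn] by simp
  qed
  have "(g z - g x)\<^sup>2 / q \<le> r x z" using r_ge[OF eg qp, of z x] by simp
  moreover have "(g z - g x)\<^sup>2 = (\<alpha> + \<beta>)\<^sup>2" using gx gz by (simp add: power2_eq_square algebra_simps)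
  ultimately have "(\<alpha> + \<beta>)\<^sup>2 / q \<le> r x z" by simp
  moreover have "(\<alpha> + \<beta>)\<^sup>2 / (\<alpha> + \<beta>) \<le> (\<alpha> + \<beta>)\<^sup>2 / q"
    using qp qle al by (intro divide_left_mono) auto
  moreover have "(\<alpha> + \<beta>)\<^sup>2 / (\<alpha> + \<beta>) = \<alpha> + \<beta>" using al by (simp add: power2_eq_square)
  ultimately have "\<alpha> + \<beta> \<le> r x z" by linarith
  then have "r x y + r y z \<le> r x z" using rxy ryz by (simp add: \<alpha>_def \<beta>_def)
  then show ?thesis using r_tri[of x z y] by linarith
qed

end

context gr begin

lemma ip_basic:
  assumes "induced_path b P a c"
  shows "P \<noteq> []" "distinct P" "hd P = a" "last P = c"
    "\<And>i j. i < length P \<Longrightarrow> j < length P \<Longrightarrow> b (P!i) (P!j) > 0 \<longleftrightarrow> (i = Suc j \<or> j = Suc i)"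
  using assms by (auto simp: induced_path_def)

lemma ip_single: "induced_path b [a] a a"
  by (auto simp: induced_path_def)

lemma ip_rtranclp:
  assumes ip: "induced_path b P a c" and S: "\<forall>w\<in>set P. S w"
  shows "(\<lambda>u v. b u v > 0 \<and> S u \<and> S v)\<^sup>*\<^sup>* a c"
proof -
  note B = ip_basic[OF ip]
  have "\<forall>k<length P. (\<lambda>u v. b u v > 0 \<and> S u \<and> S v)\<^sup>*\<^sup>* a (P!k)"
  proof (intro allI)
    fix k show "k < length P \<longrightarrow> (\<lambda>u v. b u v > 0 \<and> S u \<and> S v)\<^sup>*\<^sup>* a (P!k)"
    proof (induction k)
      case 0 then show ?case using B by (simp add: hd_conv_nth[symmetric])
    next
      case (Suc k)
      show ?case
      proof
        assume k: "Suc k < length P"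
        then have "b (P!k) (P!Suc k) > 0" using B(5)[of k "Suc k"] by simp
        moreover have "S (P!k)" "S (P!Suc k)" using S k by auto
        ultimately show "(\<lambda>u v. b u v > 0 \<and> S u \<and> S v)\<^sup>*\<^sup>* a (P!Suc k)"
          using Suc k by (auto intro: rtranclp.rtrancl_into_rtrancl)
      qed
    qed
  qed
  moreover have "c = P ! (length P - 1)" using B by (simp add: last_conv_nth)
  moreover have "length P - 1 < length P" using B by simp
  ultimately show ?thesis by auto
qed

lemma ip_tail:
  assumes ip: "induced_path b (a # u # rest) a c"
  shows "induced_path b (u # rest) u c"
proof -
  note B = ip_basic[OF ip]
  show ?thesis unfolding induced_path_def
  proof (intro conjI allI impI)
    show "u # rest \<noteq> []" "hd (u # rest) = u" by simp_all
    show "distinct (u # rest)" using B(2) by simp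
    show "last (u # rest) = c" using B(4) by simp
    fix i j assume ij: "i < length (u # rest) \<and> j < length (u # rest)"
    then have "Suc i < length (a # u # rest)" "Suc j < length (a # u # rest)" by simp_all
    then have "(0 < b ((a # u # rest) ! Suc i) ((a # u # rest) ! Suc j)) = (Suc i = Suc (Suc j) \<or> Suc j = Suc (Suc i))"
      by (rule B(5))
    then show "(0 < b ((u # rest) ! i) ((u # rest) ! j)) = (i = Suc j \<or> j = Suc i)" by simp
  qed
qed

lemma ip_same:
  assumes "induced_path b P x x"
  shows "P = [x]"
proof -
  note B = ip_basic[OF assms]
  have "length P = 1"
  proof (rule ccontr)
    assume "length P \<noteq> 1"
    moreover have "length P > 0" using B(1) by simp
    ultimately have l: "length P \<ge> 2" by linarith
    have "P ! 0 = P ! (length P - 1)" using B by (simp add: hd_conv_nth last_conv_nth)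
    moreover have "0 < length P" "length P - 1 < length P" using l by auto
    ultimately have "0 = length P - 1" using nth_eq_iff_index_eq[OF B(2), of 0 "length P - 1"] by blast
    then show False using l by arith
  qed
  then show ?thesis using B by (cases P) auto
qed

lemma ip_adj:
  assumes "induced_path b P x y" "b x y > 0"
  shows "P = [x, y]"
proof -
  note B = ip_basic[OF assms(1)]
  have xy: "x \<noteq> y" using assms(2) by auto
  define n where "n = length P"
  have n1: "n \<ge> 1" using B(1) by (cases P) (simp_all add: n_def)
  have p0: "P ! 0 = x" using B by (simp add: hd_conv_nth)
  have pn: "P ! (n - 1) = y" using B by (simp add: last_conv_nth n_def)
  have "b (P ! 0) (P ! (n - 1)) > 0" using assms(2) p0 pn by simp
  moreover have "0 < length P" "n - 1 < length P" using n1 by (auto simp: n_def)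
  ultimately have "0 = Suc (n - 1) \<or> n - 1 = Suc 0" using B(5)[of 0 "n - 1"] by blast
  then have "n = 2" using n1 by auto
  then obtain a l where al: "P = a # l" "length l = 1" unfolding n_def by (cases P) auto
  then obtain c where "l = [c]" by (cases l) auto
  then show ?thesis using p0 pn \<open>n = 2\<close> al by simp
qed

lemma ip_prefix:
  assumes ip: "induced_path b P a c" and k: "k < length P"
  shows "induced_path b (take (Suc k) P) a (P ! k)"
proof -
  note B = ip_basic[OF ip]
  have l: "length (take (Suc k) P) = Suc k" using k by simp
  show ?thesis unfolding induced_path_def
  proof (intro conjI allI impI)
    show "take (Suc k) P \<noteq> []" using B by simp
    show "distinct (take (Suc k) P)" using B by simp
    show "hd (take (Suc k) P) = a" using B by (cases P) auto
    show "last (take (Suc k) P) = P ! k" by (subst last_conv_nth) (use k B(1) in auto)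
    fix i j assume "i < length (take (Suc k) P) \<and> j < length (take (Suc k) P)"
    then have ij: "i \<le> k" "j \<le> k" using l by auto
    then show "(0 < b (take (Suc k) P ! i) (take (Suc k) P ! j)) = (i = Suc j \<or> j = Suc i)"
      using B(5)[of i j] k by simp
  qed
qed

lemma ip_append:
  assumes ip: "induced_path b Q a u" and cQ: "c \<notin> set Q" and uc: "b u c > 0"
    and na: "\<And>w. w \<in> set Q \<Longrightarrow> w \<noteq> u \<Longrightarrow> \<not> b w c > 0"
  shows "induced_path b (Q @ [c]) a c"
proof -
  note B = ip_basic[OF ip]
  define n where "n = length Q"
  have n1: "n \<ge> 1" using B(1) by (cases Q) (simp_all add: n_def)
  have un: "Q ! (n - 1) = u" using B by (simp add: last_conv_nth n_def)
  have key: "b (Q ! j) c > 0 \<longleftrightarrow> j = n - 1" if "j < n" for j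
  proof
    assume "b (Q ! j) c > 0"
    then have "Q ! j = u" using na[of "Q ! j"] that by (auto simp: n_def)
    then show "j = n - 1" using nth_eq_iff_index_eq[OF B(2), of j "n - 1"] un that n1 by (simp add: n_def)
  next
    assume "j = n - 1" then show "b (Q ! j) c > 0" using un uc by simp
  qed
  show ?thesis unfolding induced_path_def
  proof (intro conjI allI impI)
    show "Q @ [c] \<noteq> []" by simp
    show "distinct (Q @ [c])" using B cQ by simp
    show "hd (Q @ [c]) = a" using B by simp
    show "last (Q @ [c]) = c" by simp
    fix i j assume "i < length (Q @ [c]) \<and> j < length (Q @ [c])"
    then have ij: "i \<le> n" "j \<le> n" by (auto simp: n_def)
    consider "i < n" "j < n" | "i = n" "j < n" | "i < n" "j = n" | "i = n" "j = n" using ij by linarith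
    then show "(0 < b ((Q @ [c]) ! i) ((Q @ [c]) ! j)) = (i = Suc j \<or> j = Suc i)"
    proof cases
      case 1 then show ?thesis using B(5)[of i j] by (simp add: nth_append n_def)
    next
      case 2
      then have "(Q @ [c]) ! i = c" "(Q @ [c]) ! j = Q ! j" by (simp_all add: nth_append n_def)
      then show ?thesis using key[of j] 2 n1 b_sym[of c "Q ! j"] by auto
    next
      case 3
      then have "(Q @ [c]) ! j = c" "(Q @ [c]) ! i = Q ! i" by (simp_all add: nth_append n_def)
      then show ?thesis using key[of i] 3 n1 by auto
    next
      case 4 then show ?thesis by simp
    qed
  qed
qed

lemma ip_exists:
  assumes "(\<lambda>u v. b u v > 0 \<and> S u \<and> S v)\<^sup>*\<^sup>* a c" "S a"
  shows "\<exists>P. induced_path b P a c \<and> (\<forall>w\<in>set P. S w)"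
  using assms(1)
proof (induction rule: rtranclp_induct)
  case base
  show ?case by (intro exI[of _ "[a]"]) (simp add: ip_single assms(2))
next
  case (step v c)
  then obtain P where P: "induced_path b P a v" "\<forall>w\<in>set P. S w" by blast
  note B = ip_basic[OF P(1)]
  show ?case
  proof (cases "c \<in> set P")
    case True
    then obtain k where k: "k < length P" "P ! k = c" by (auto simp: in_set_conv_nth)
    have "induced_path b (take (Suc k) P) a c" using ip_prefix[OF P(1) k(1)] k by simp
    moreover have "\<forall>w\<in>set (take (Suc k) P). S w" using P(2) by (auto dest: in_set_takeD)
    ultimately show ?thesis by blast
  next
    case False
    define Pr where "Pr = (\<lambda>i. i < length P \<and> b (P ! i) c > 0)"
    have "P ! (length P - 1) = v" using B(1,4) last_conv_nth[of P] by simp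
    then have ex: "Pr (length P - 1)" using B(1) step by (simp add: Pr_def)
    define i where "i = (LEAST i. Pr i)"
    have Pi: "Pr i" unfolding i_def using ex by (rule LeastI)
    have mini: "\<not> Pr j" if "j < i" for j using not_less_Least[of j Pr] that by (simp add: i_def)
    have ilt: "i < length P" using Pi by (simp add: Pr_def)
    let ?Q = "take (Suc i) P"
    have ipQ: "induced_path b ?Q a (P ! i)" by (rule ip_prefix[OF P(1) ilt])
    have "induced_path b (?Q @ [c]) a c"
    proof (rule ip_append[OF ipQ])
      show "c \<notin> set ?Q" using False by (auto dest: in_set_takeD)
      show "b (P ! i) c > 0" using Pi by (simp add: Pr_def)
      fix w assume w: "w \<in> set ?Q" "w \<noteq> P ! i"
      then obtain j where j: "j < length ?Q" "?Q ! j = w" by (auto simp: in_set_conv_nth)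
      then have "j \<le> i" "P ! j = w" using ilt by auto
      then have "j < i" using w by (cases "j = i") auto
      then show "\<not> b w c > 0" using mini[of j] \<open>P ! j = w\<close> ilt by (simp add: Pr_def)
    qed
    moreover have "\<forall>w\<in>set (?Q @ [c]). S w" using P(2) step by (auto dest: in_set_takeD)
    ultimately show ?thesis by blast
  qed
qed

lemma ip_exists_conn: "\<exists>P. induced_path b P a c"
proof -
  have "(\<lambda>u v. b u v > 0 \<and> True \<and> True)\<^sup>*\<^sup>* a c" using conn[of a c] by simp
  then show ?thesis using ip_exists[of "\<lambda>_. True" a c] by auto
qed

lemma avoid_eq: "avoid y = (\<lambda>u v. b u v > 0 \<and> (\<lambda>w. w \<noteq> y) u \<and> (\<lambda>w. w \<noteq> y) v)"
  by (auto simp: avoid_def fun_eq_iff)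

end

lemma ex1_eq: "\<exists>!x. Q x \<Longrightarrow> Q y \<Longrightarrow> Q z \<Longrightarrow> y = z" by blast

lemma path_length_cons: "path_length w (a # u # rest) = w a u + path_length w (u # rest)"
  by (simp add: path_length_def)

lemma path_length_single[simp]: "path_length w [a] = 0"
  by (simp add: path_length_def)

context gr begin

definition wt :: "'a \<Rightarrow> 'a \<Rightarrow> ennreal" where
  "wt x y = (if x = y then 0 else if b x y > 0 then ennreal (r x y) else \<infinity>)"

lemma wt_ge: "ennreal (r x y) \<le> wt x y"
  by (simp add: wt_def)

lemma block_sep:
  assumes blk: "block_graph b" and ip: "induced_path b (a # u # rest) a c" and uc: "u \<noteq> c"
  shows "\<not> (avoid u)\<^sup>*\<^sup>* a c"
proof
  assume "(avoid u)\<^sup>*\<^sup>* a c"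
  then have R: "(\<lambda>x y. b x y > 0 \<and> (\<lambda>w. w \<noteq> u) x \<and> (\<lambda>w. w \<noteq> u) y)\<^sup>*\<^sup>* a c" by (simp add: avoid_eq)
  have "a \<noteq> u" using ip_basic(2)[OF ip] by auto
  then obtain P where P: "induced_path b P a c" "\<forall>w\<in>set P. w \<noteq> u"
    using ip_exists[OF R] by auto
  have "P = a # u # rest" using ex1_eq[of "\<lambda>xs. induced_path b xs a c"] blk P(1) ip
    unfolding block_graph_def by blast
  then show False using P(2) by simp
qed

lemma block_length:
  assumes blk: "block_graph b"
  shows "induced_path b P a c \<Longrightarrow> path_length wt P = ennreal (r a c)"
proof (induction P arbitrary: a)
  case Nil then show ?case by (simp add: induced_path_def)
next
  case (Cons a' P)
  note B = ip_basic[OF Cons.prems]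
  show ?case
  proof (cases P)
    case Nil
    then have "a = c" using B by simp
    then show ?thesis using Nil by simp
  next
    case (Cons u rest)
    have aa: "a' = a" using B by simp
    have ip: "induced_path b (a # u # rest) a c" using Cons.prems Cons aa by simp
    note B2 = ip_basic[OF ip]
    have au: "a \<noteq> u" using B2(2) by auto
    have bau: "b a u > 0" using B2(5)[of 0 1] by simp
    have tail: "induced_path b (u # rest) u c" by (rule ip_tail[OF ip])
    have IH: "path_length wt (u # rest) = ennreal (r u c)" using Cons.IH[OF tail[folded Cons]] Cons by simp
    have wau: "wt a u = ennreal (r a u)" using au bau by (simp add: wt_def)
    have "path_length wt (a # u # rest) = ennreal (r a u) + ennreal (r u c)"
      by (simp add: path_length_cons wau IH)
    also have "\<dots> = ennreal (r a c)"
    proof (cases "u = c")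
      case True then show ?thesis by simp
    next
      case False
      have "r a c = r a u + r u c"
        by (rule r_add_sep[OF au False block_sep[OF blk ip False]])
      then show ?thesis by (simp add: r_nonneg)
    qed
    finally show ?thesis using Cons aa by simp
  qed
qed

lemma length_lower:
  "xs \<noteq> [] \<Longrightarrow> ennreal (r (hd xs) (last xs)) \<le> path_length wt xs"
proof (induction xs)
  case Nil then show ?case by simp
next
  case (Cons a xs)
  show ?case
  proof (cases xs)
    case Nil then show ?thesis by simp
  next
    case (Cons u rest)
    have IH: "ennreal (r u (last xs)) \<le> path_length wt xs" using Cons.IH Cons by simp
    have "ennreal (r a (last xs)) \<le> ennreal (r a u + r u (last xs))"
      using r_tri[of a "last xs" u] by (rule ennreal_leI)
    also have "\<dots> = ennreal (r a u) + ennreal (r u (last xs))" by (simp add: r_nonneg)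
    also have "\<dots> \<le> wt a u + path_length wt xs" using wt_ge IH by (rule add_mono)
    also have "\<dots> = path_length wt (a # xs)" using Cons by (simp add: path_length_cons)
    finally show ?thesis using Cons by simp
  qed
qed

lemma dir_ii_i:
  assumes blk: "block_graph b"
  shows "\<exists>w. is_weight w \<and> compatible w b \<and> resistance b = path_metric w"
proof (intro exI conjI)
  show "is_weight wt"
    unfolding is_weight_def
  proof (intro conjI allI)
    fix x y show "wt x y = wt y x" by (simp add: wt_def b_sym[of x y] r_sym[of x y] eq_commute)
    show "(wt x y = 0) = (x = y)"
      using r_pos[of x y] by (auto simp: wt_def)
  qed
  show "compatible wt b" by (simp add: compatible_def wt_def)
  show "resistance b = path_metric wt"
  proof (intro ext)
    fix x y
    define S where "S = {path_length wt xs |xs. xs \<noteq> [] \<and> distinct xs \<and> hd xs = x \<and> last xs = y}"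
    have pm: "path_metric wt x y = Inf S" by (simp add: path_metric_def S_def)
    obtain P where P: "induced_path b P x y" using ip_exists_conn by blast
    have "path_length wt P \<in> S" using ip_basic[OF P] unfolding S_def by blast
    then have le: "Inf S \<le> ennreal (r x y)" using block_length[OF blk P] by (metis Inf_lower)
    have ge: "ennreal (r x y) \<le> Inf S"
      unfolding S_def using length_lower by (auto intro!: Inf_greatest)
    show "resistance b x y = path_metric wt x y" using le ge pm R_fin[of x y] by simp
  qed
qed

lemma ip_through:
  assumes ip: "induced_path b Q x y" and xt: "b x t > 0" and sep: "\<not> (avoid t)\<^sup>*\<^sup>* x y"
  shows "\<exists>rest. Q = x # t # rest"
proof -
  note B = ip_basic[OF ip]
  have "t \<in> set Q"
  proof (rule ccontr)
    assume "t \<notin> set Q"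
    then have "\<forall>w\<in>set Q. (\<lambda>w. w \<noteq> t) w" by auto
    then have "(\<lambda>u v. b u v > 0 \<and> (\<lambda>w. w \<noteq> t) u \<and> (\<lambda>w. w \<noteq> t) v)\<^sup>*\<^sup>* x y"
      by (rule ip_rtranclp[OF ip])
    then show False using sep by (simp add: avoid_eq)
  qed
  then obtain k where k: "k < length Q" "Q ! k = t" by (auto simp: in_set_conv_nth)
  have q0: "Q ! 0 = x" using B by (simp add: hd_conv_nth)
  have "0 < length Q" using B by simp
  then have "0 = Suc k \<or> k = Suc 0" using B(5)[of 0 k] k xt q0 by simp
  then have k1: "k = 1" by simp
  obtain a l where al: "Q = a # l" using B by (cases Q) auto
  then obtain u rest where "l = u # rest" using k k1 by (cases l) auto
  then show ?thesis using al q0 k k1 by simp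
qed

end

context gr begin

lemma pm_le:
  assumes "xs \<noteq> []" "distinct xs" "hd xs = x" "last xs = y"
  shows "path_metric w x y \<le> path_length w xs"
  unfolding path_metric_def using assms by (auto intro!: Inf_lower)

lemma key_sep:
  assumes comp: "compatible w b" and hR: "\<And>x y. ennreal (r x y) = path_metric w x y"
    and xy: "x \<noteq> y" and nxy: "\<not> b x y > 0"
  shows "\<exists>t. b x t > 0 \<and> \<not> (avoid t)\<^sup>*\<^sup>* x y"
proof (rule ccontr)
  assume "\<not> ?thesis"
  then have H: "\<And>t. b x t > 0 \<Longrightarrow> (avoid t)\<^sup>*\<^sup>* x y" by blast
  define N where "N = {t. b x t > 0}"
  have Nfin: "finite N" using finN by (simp add: N_def)
  obtain t0 where "b x t0 > 0"
    using conn[of x y] xy by (metis converse_rtranclpE)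
  then have Nne: "N \<noteq> {}" by (auto simp: N_def)
  define m where "m = Min ((\<lambda>t. r x t + r t y) ` N)"
  have mlt: "r x y < m"
  proof -
    have "m \<in> (\<lambda>t. r x t + r t y) ` N" unfolding m_def using Nfin Nne by (intro Min_in) auto
    then obtain t where t: "t \<in> N" "m = r x t + r t y" by auto
    have "t \<noteq> x" using t by (auto simp: N_def)
    moreover have "t \<noteq> y" using t nxy by (auto simp: N_def)
    ultimately show ?thesis using r_tri_strict[of t x y] H t by (simp add: N_def)
  qed
  have mle: "m \<le> r x t + r t y" if "t \<in> N" for t
    unfolding m_def using Nfin that by (intro Min_le) auto
  have "ennreal m \<le> path_metric w x y"
    unfolding path_metric_def
  proof (rule Inf_greatest, clarify)
    fix xs :: "'a list" assume xs: "xs \<noteq> []" "distinct xs" "x = hd xs" "y = last xs"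
    obtain t rest where xs2: "xs = x # t # rest"
    proof (cases xs)
      case Nil then show ?thesis using xs by simp
    next
      case (Cons a l)
      then show ?thesis using xs xy that by (cases l) auto
    qed
    have xt: "x \<noteq> t" using xs(2) xs2 by auto
    have pl: "path_length w xs = w x t + path_length w (t # rest)" using xs2 by (simp add: path_length_cons)
    show "ennreal m \<le> path_length w xs"
    proof (cases "b x t > 0")
      case True
      have "path_metric w x t \<le> path_length w [x, t]" by (rule pm_le) (use xt in auto)
      then have w1: "ennreal (r x t) \<le> w x t" using hR[of x t] by (simp add: path_length_cons)
      have d: "distinct (t # rest)" using xs(2) unfolding xs2 by simp
      have l: "last (t # rest) = y" using xs(4) unfolding xs2 by simp
      have "path_metric w t y \<le> path_length w (t # rest)"
        using pm_le[OF _ d _ l] by simp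
      then have w2: "ennreal (r t y) \<le> path_length w (t # rest)" using hR[of t y] by simp
      have "ennreal m \<le> ennreal (r x t + r t y)" using mle[of t] True by (intro ennreal_leI) (simp add: N_def)
      also have "\<dots> = ennreal (r x t) + ennreal (r t y)" by (simp add: r_nonneg)
      also have "\<dots> \<le> path_length w xs" unfolding pl using w1 w2 by (rule add_mono)
      finally show ?thesis .
    next
      case False
      then have "b x t = 0" by (rule b_not_pos)
      then have "w x t = \<infinity>" using comp xt by (simp add: compatible_def)
      then show ?thesis unfolding pl by simp
    qed
  qed
  then have "ennreal m \<le> ennreal (r x y)" using hR[of x y] by simp
  then have "m \<le> r x y" using r_nonneg[of x y] by (simp add: ennreal_le_iff)
  then show False using mlt by simp
qed

lemma uniq:
  assumes comp: "compatible w b" and hR: "\<And>x y. ennreal (r x y) = path_metric w x y"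
  shows "induced_path b P x y \<Longrightarrow> induced_path b P' x y \<Longrightarrow> P = P'"
proof (induction "length P" arbitrary: P P' x rule: less_induct)
  case less
  show ?case
  proof (cases "x = y")
    case True
    then have "induced_path b P x x" "induced_path b P' x x" using less.prems by simp_all
    then have "P = [x]" "P' = [x]" by (simp_all add: ip_same)
    then show ?thesis by simp
  next
    case xy: False
    show ?thesis
    proof (cases "b x y > 0")
      case True
      have "P = [x, y]" using less.prems(1) True by (rule ip_adj)
      moreover have "P' = [x, y]" using less.prems(2) True by (rule ip_adj)
      ultimately show ?thesis by simp
    next
      case False
      obtain t where t: "b x t > 0" "\<not> (avoid t)\<^sup>*\<^sup>* x y"
        using key_sep[OF comp hR xy False] by blast
      obtain rest where P: "P = x # t # rest" using ip_through[OF less.prems(1) t] by blast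
      obtain rest' where P': "P' = x # t # rest'" using ip_through[OF less.prems(2) t] by blast
      have i1: "induced_path b (t # rest) t y" using less.prems(1) unfolding P by (rule ip_tail)
      have i2: "induced_path b (t # rest') t y" using less.prems(2) unfolding P' by (rule ip_tail)
      have "length (t # rest) < length P" using P by simp
      then have "t # rest = t # rest'" using less.hyps i1 i2 by blast
      then show ?thesis using P P' by simp
    qed
  qed
qed

lemma dir_i_ii:
  assumes "is_weight w" "compatible w b" "resistance b = path_metric w"
  shows "block_graph b"
proof -
  have hR: "ennreal (r x y) = path_metric w x y" for x y
    using fun_cong[OF fun_cong[OF assms(3), of x], of y] R_fin[of x y] by simp
  show ?thesis unfolding block_graph_def
  proof (intro allI)
    fix x y
    obtain P where P: "induced_path b P x y" using ip_exists_conn by blast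
    show "\<exists>!xs. induced_path b xs x y"
    proof (rule ex1I[of _ P])
      show "induced_path b P x y" by (fact P)
      fix Q assume "induced_path b Q x y"
      then show "Q = P" using uniq[OF assms(2) hR] P by blast
    qed
  qed
qed

end

theorem theorem3p4:
  fixes b :: "'a::countable \<Rightarrow> 'a \<Rightarrow> real"
  assumes "is_graph b" and "locally_finite b" and "graph_connected b"
  shows "(\<exists>w. is_weight w \<and> compatible w b \<and> resistance b = path_metric w) \<longleftrightarrow> block_graph b"
proof -
  interpret gr b using assms by unfold_locales
  show ?thesis
  proof
    assume "\<exists>w. is_weight w \<and> compatible w b \<and> resistance b = path_metric w"
    then obtain w where "is_weight w" "compatible w b" "resistance b = path_metric w" by blast
    then show "block_graph b" by (rule dir_i_ii)
  next
    assume "block_graph b"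
    then show "\<exists>w. is_weight w \<and> compatible w b \<and> resistance b = path_metric w" by (rule dir_ii_i)
  qed
qed


end
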